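(* Let $(X,\{\tau_n:n<\omega\})$ be a GLP-space in which the topologies are $T_3$, and let $n<\omega$. For any $A,B\subseteq X$: $A\vdash_n B$ if and only if $c_n(A)\subseteq c_n(B)$ or $B\not\subseteq d_n(X)$.
   Context: For a topology $\tau_n$ on $X$, $d_n(A)$ denotes the set of limit points of $A\subseteq X$ (the derivative) and $c_n(A)$ the closure of $A$ with respect to $\tau_n$. A GLP-space is a nonempty set $X$ with topologies $\tau_n$, $n<\omega$, such that the powerset boolean algebra $({\mathcal P}(X),\{d_n\})$ is a GLP-algebra, i.e. for all $n$, all $m<n$ and all $x,y\subseteq X$: $d_n(x\cup y)=d_n(x)\cup d_n(y)$; $d_n(\emptyset)=\emptyset$; $d_n(x)=d_n(x\setminus d_n(x))$; $d_n(x)\subseteq d_m(x)$; $d_m(x)\subseteq X\setminus d_n(X\setminus d_m(x))$. For $A,B\subseteq X$, $A\vdash_n B$ means: for every $Z\subseteq X$, if $B\subseteq d_n(Z)$ then $A\subseteq d_n(Z)$. *)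

theory Defs
  imports "HOL-Analysis.Analysis"
begin

definition dn :: "(nat \<Rightarrow> 'a topology) \<Rightarrow> nat \<Rightarrow> 'a set \<Rightarrow> 'a set" where
  "dn \<tau> n A = (\<tau> n) derived_set_of A"

definition cn :: "(nat \<Rightarrow> 'a topology) \<Rightarrow> nat \<Rightarrow> 'a set \<Rightarrow> 'a set" where
  "cn \<tau> n A = (\<tau> n) closure_of A"

text \<open>GLP-space: nonempty X with topologies tau_n on X such that (P(X), d_n) is a GLP-algebra.\<close>
definition GLP_space :: "'a set \<Rightarrow> (nat \<Rightarrow> 'a topology) \<Rightarrow> bool" where
  "GLP_space X \<tau> \<longleftrightarrow> X \<noteq> {} \<and> (\<forall>n. topspace (\<tau> n) = X) \<and>
     (\<forall>n x y. x \<subseteq> X \<and> y \<subseteq> X \<longrightarrow>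
        dn \<tau> n (x \<union> y) = dn \<tau> n x \<union> dn \<tau> n y \<and>
        dn \<tau> n {} = {} \<and>
        dn \<tau> n x = dn \<tau> n (x - dn \<tau> n x) \<and>
        (\<forall>m<n. dn \<tau> n x \<subseteq> dn \<tau> m x \<and>
                dn \<tau> m x \<subseteq> X - dn \<tau> n (X - dn \<tau> m x)))"

definition T3_space :: "'a topology \<Rightarrow> bool" where
  "T3_space T \<longleftrightarrow> regular_space T \<and> t1_space T"

definition entails_n :: "'a set \<Rightarrow> (nat \<Rightarrow> 'a topology) \<Rightarrow> nat \<Rightarrow> 'a set \<Rightarrow> 'a set \<Rightarrow> bool" where
  "entails_n X \<tau> n A B \<longleftrightarrow> (\<forall>Z. Z \<subseteq> X \<longrightarrow> B \<subseteq> dn \<tau> n Z \<longrightarrow> A \<subseteq> dn \<tau> n Z)"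

end

theory Submission
  imports Defs
begin

theorem mainTheorem5:
  fixes X :: "'a set" and \<tau> :: "nat \<Rightarrow> 'a topology" and n :: nat and A B :: "'a set"
  assumes "GLP_space X \<tau>"
    and "\<forall>k. T3_space (\<tau> k)"
    and "A \<subseteq> X" and "B \<subseteq> X"
  shows "entails_n X \<tau> n A B \<longleftrightarrow> (cn \<tau> n A \<subseteq> cn \<tau> n B \<or> \<not> B \<subseteq> dn \<tau> n X)"
proof -
  let ?T = "\<tau> n"
  have top: "topspace ?T = X" using assms(1) unfolding GLP_space_def by blast
  have t1: "t1_space ?T" and reg: "regular_space ?T"
    using assms(2) unfolding T3_space_def by auto
  show ?thesis
  proof
    assume E: "entails_n X \<tau> n A B"
    show "cn \<tau> n A \<subseteq> cn \<tau> n B \<or> \<not> B \<subseteq> dn \<tau> n X"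
    proof (rule ccontr)
      assume "\<not> ?thesis"
      hence nc: "\<not> cn \<tau> n A \<subseteq> cn \<tau> n B" and BX: "B \<subseteq> dn \<tau> n X" by auto
      have "\<not> A \<subseteq> ?T closure_of B"
      proof
        assume "A \<subseteq> ?T closure_of B"
        hence "?T closure_of A \<subseteq> ?T closure_of B"
          by (simp add: closure_of_minimal)
        thus False using nc unfolding cn_def by simp
      qed
      then obtain a where aA: "a \<in> A" and anc: "a \<notin> ?T closure_of B" by blast
      have "a \<in> topspace ?T" using aA assms(3) top by blast
      then obtain U V where U: "openin ?T U" and V: "openin ?T V" and "a \<in> U"
        and CV: "?T closure_of B \<subseteq> V" and dj: "disjnt U V"
        using reg anc unfolding regular_space_def by (meson Diff_iff closedin_closure_of)
      have VX: "V \<subseteq> X" using V openin_subset top by blast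
      have "B \<subseteq> dn \<tau> n V"
      proof
        fix b assume bB: "b \<in> B"
        hence bd: "b \<in> ?T derived_set_of X" using BX unfolding dn_def by blast
        have bV: "b \<in> V" using bB CV closure_of_subset assms(4) top by blast
        show "b \<in> dn \<tau> n V" unfolding dn_def in_derived_set_of
        proof (intro conjI allI impI)
          show "b \<in> topspace ?T" using bd in_derived_set_of by metis
        next
          fix T assume "b \<in> T \<and> openin ?T T"
          hence "b \<in> T \<inter> V" "openin ?T (T \<inter> V)" using bV V by auto
          then obtain y where "y \<noteq> b" "y \<in> X" "y \<in> T \<inter> V"
            using bd unfolding in_derived_set_of by blast
          thus "\<exists>y. y \<noteq> b \<and> y \<in> V \<and> y \<in> T" by blast
        qed
      qed
      hence "A \<subseteq> dn \<tau> n V" using E VX unfolding entails_n_def by blast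
      hence "a \<in> ?T derived_set_of V" using aA unfolding dn_def by blast
      then obtain y where "y \<in> V" "y \<in> U" using U \<open>a \<in> U\<close> unfolding in_derived_set_of by blast
      thus False using dj unfolding disjnt_def by blast
    qed
  next
    assume H: "cn \<tau> n A \<subseteq> cn \<tau> n B \<or> \<not> B \<subseteq> dn \<tau> n X"
    show "entails_n X \<tau> n A B"
      unfolding entails_n_def
    proof (intro allI impI)
      fix Z assume ZX: "Z \<subseteq> X" and BZ: "B \<subseteq> dn \<tau> n Z"
      have "dn \<tau> n Z \<subseteq> dn \<tau> n X" unfolding dn_def by (rule derived_set_of_mono[OF ZX])
      hence c: "cn \<tau> n A \<subseteq> cn \<tau> n B" using H BZ by blast
      have "?T closure_of B \<subseteq> ?T derived_set_of Z"
        using BZ closedin_derived_set_of_gen[OF t1] closure_of_minimal unfolding dn_def by blast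
      moreover have "A \<subseteq> ?T closure_of A" using closure_of_subset assms(3) top by blast
      ultimately show "A \<subseteq> dn \<tau> n Z" using c unfolding cn_def dn_def by blast
    qed
  qed
qed

end
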